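(* Let $n\ge1$ and let $A:\mathbb{Z}^n\to\mathbb{C}$ be a function with $T'_{l_i,l_{i+1}}A(l_1,\ldots,l_n)=0$ for all $i$ with $1\le i<n$. Then $$T'_{k_i,k_{i+1}}\left(\sum_{(l_1,\ldots,l_n)}^{(k_1,\ldots,k_{n+1})}A(l_1,\ldots,l_n)\right)(k_1,\ldots,k_{n+1})=0$$ for all $i$ with $1\le i\le n$.
   Context: Extended interval sums: $\sum_{i=a}^b F(i)=F(a)+\cdots+F(b)$ if $a\le b$, $=0$ if $b=a-1$, and $=-F(b+1)-\cdots-F(a-1)$ if $b+1\le a-1$. For functions $A$ on $\mathbb{Z}^{m-1}$ and $(k_1,\ldots,k_m)\in\mathbb{Z}^m$ define recursively $\sum_{(l_1)}^{(k_1,k_2)}A(l_1)=\sum_{l_1=k_1}^{k_2}A(l_1)$ and, for $m>2$, $$\sum_{(l_1,\ldots,l_{m-1})}^{(k_1,\ldots,k_m)}A=\sum_{(l_1,\ldots,l_{m-2})}^{(k_1,\ldots,k_{m-1})}\sum_{l_{m-1}=k_{m-1}+1}^{k_m}A(l_1,\ldots,l_{m-1})+\sum_{(l_1,\ldots,l_{m-2})}^{(k_1,\ldots,k_{m-1}-1)}A(l_1,\ldots,l_{m-2},k_{m-1}).$$ For variables $x,y$: $E_x$ is the shift $E_xF(x)=F(x+1)$ (other variables fixed), $\Delta_x=E_x-\operatorname{id}$, $S_{x,y}$ swaps $x$ and $y$, and $T'_{x,y}=(\operatorname{id}+S_{x,y})(\operatorname{id}+E_y\Delta_x)$; products of operators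 are compositions. *)

theory Defs
  imports Complex_Main
begin

text \<open>Points of Z^n are int lists of length n; position i (0-based) is variable number i+1.\<close>

definition esum :: "(int \<Rightarrow> complex) \<Rightarrow> int \<Rightarrow> int \<Rightarrow> complex" where
  "esum F a b = (if a \<le> b then (\<Sum>i=a..b. F i)
                 else if b = a - 1 then 0
                 else - (\<Sum>i=b+1..a-1. F i))"

text \<open>msum n A k: the extended multiple sum with n summation variables (l_1..l_n)
  and bounds k = (k_1..k_{n+1}); only meaningful for n >= 1 and length k = n+1.\<close>
fun msum :: "nat \<Rightarrow> (int list \<Rightarrow> complex) \<Rightarrow> int list \<Rightarrow> complex" where
  "msum 0 A k = A []"
| "msum (Suc 0) A k = esum (\<lambda>l. A [l]) (k ! 0) (k ! 1)"
| "msum (Suc (Suc n)) A k =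
     msum (Suc n) (\<lambda>ls. esum (\<lambda>l. A (ls @ [l])) (k ! (n+1) + 1) (k ! (n+2))) (take (n+2) k)
   + msum (Suc n) (\<lambda>ls. A (ls @ [k ! (n+1)])) (take (n+1) k @ [k ! (n+1) - 1])"

definition shiftE :: "nat \<Rightarrow> (int list \<Rightarrow> complex) \<Rightarrow> int list \<Rightarrow> complex" where
  "shiftE i F x = F (x[i := x ! i + 1])"

definition diffD :: "nat \<Rightarrow> (int list \<Rightarrow> complex) \<Rightarrow> int list \<Rightarrow> complex" where
  "diffD i F x = shiftE i F x - F x"

definition swapS :: "nat \<Rightarrow> nat \<Rightarrow> (int list \<Rightarrow> complex) \<Rightarrow> int list \<Rightarrow> complex" where
  "swapS i j F x = F (x[i := x ! j, j := x ! i])"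

text \<open>T'_{x,y} = (id + S_{x,y}) (id + E_y Delta_x), x = position i, y = position j.\<close>
definition Tprime :: "nat \<Rightarrow> nat \<Rightarrow> (int list \<Rightarrow> complex) \<Rightarrow> int list \<Rightarrow> complex" where
  "Tprime i j F = (let G = (\<lambda>x. F x + shiftE j (diffD i F) x) in (\<lambda>x. G x + swapS i j G x))"

end

theory Submission
  imports Defs
begin

lemma int_const:
  fixes f :: "int \<Rightarrow> 'a"
  assumes "\<And>y. f (y + 1) = f y"
  shows "f y = f x"
proof -
  have "f i = f x" for i
  proof (induction i rule: int_induct[where k = x])
    case base then show ?case by simp
  next
    case (step1 i) then show ?case using assms by simp
  next
    case (step2 i) then show ?case using assms[of "i - 1"] by simp
  qed
  then show ?thesis by simp
qed

lemma esum_single[simp]: "esum F a a = F a"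
  by (simp add: esum_def)

lemma esum_empty[simp]: "esum F a (a - 1) = 0"
  by (simp add: esum_def)

lemma esum_empty2[simp]: "esum F (b + 1) b = 0"
  by (simp add: esum_def)

lemma esum_up: "esum F a (b + 1) = esum F a b + F (b + 1)"
proof (cases "a \<le> b")
  case True
  have "{a..b+1} = insert (b+1) {a..b}" using True by auto
  then show ?thesis using True by (simp add: esum_def)
next
  case False
  show ?thesis
  proof (cases "b = a - 1")
    case True then show ?thesis by (simp add: esum_def)
  next
    case False2: False
    have "{b+1..a-1} = insert (b+1) {b+1+1..a-1}" using False False2 by auto
    then show ?thesis using False False2 by (auto simp add: esum_def)
  qed
qed

lemma esum_prim0: "esum F a b = esum F 0 b - esum F 0 (a - 1)"
proof -
  let ?g = "\<lambda>b. esum F a b - esum F 0 b"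
  have "?g (b + 1) = ?g b" for b by (simp add: esum_up)
  then have "?g b = ?g (a - 1)" by (rule int_const)
  then show ?thesis by (simp add: algebra_simps)
qed

definition prim :: "(int \<Rightarrow> complex) \<Rightarrow> int \<Rightarrow> complex" where
  "prim F y = esum F 0 y"

lemma esum_prim: "esum F a b = prim F b - prim F (a - 1)"
  unfolding prim_def by (rule esum_prim0)

lemma esum_add: "esum (\<lambda>x. f x + g x) a b = esum f a b + esum g a b"
  by (simp add: esum_def sum.distrib)
lemma esum_diff: "esum (\<lambda>x. f x - g x) a b = esum f a b - esum g a b"
  by (simp add: esum_def sum_subtractf)
lemma esum_zero[simp]: "esum (\<lambda>x. 0) a b = 0"
  by (simp add: esum_def)
lemma esum_uminus: "esum (\<lambda>x. - f x) a b = - esum f a b"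
  by (simp add: esum_def sum_negf)

lemma prim_add: "prim (\<lambda>x. f x + g x) y = prim f y + prim g y"
  by (simp add: prim_def esum_add)
lemma prim_diff: "prim (\<lambda>x. f x - g x) y = prim f y - prim g y"
  by (simp add: prim_def esum_diff)
lemma prim_uminus: "prim (\<lambda>x. - f x) y = - prim f y"
  by (simp add: prim_def esum_uminus)

lemma esum_low: "esum F a b = F a + esum F (a + 1) b"
  using esum_prim[of F a b] esum_prim[of F "a+1" b] esum_prim[of F a a] by simp

lemma esum_shift: "esum (\<lambda>t. f (t + 1)) r s = esum f (r + 1) (s + 1)"
proof -
  let ?g = "\<lambda>s. esum (\<lambda>t. f (t + 1)) r s - esum f (r + 1) (s + 1)"
  have "?g (s + 1) = ?g s" for s
    unfolding esum_up[of "\<lambda>t. f (t + 1)" r s] esum_up[of f "r+1" "s+1"] by simp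
  then have "?g s = ?g (r - 1)" by (rule int_const)
  then show ?thesis by simp
qed

lemma esum_swap: "esum (\<lambda>x. esum (\<lambda>y. F x y) c d) a b = esum (\<lambda>y. esum (\<lambda>x. F x y) a b) c d"
proof -
  let ?g = "\<lambda>b. esum (\<lambda>x. esum (\<lambda>y. F x y) c d) a b - esum (\<lambda>y. esum (\<lambda>x. F x y) a b) c d"
  have "?g (b + 1) = ?g b" for b by (simp add: esum_up esum_add)
  then have "?g b = ?g (a - 1)" by (rule int_const)
  then show ?thesis by simp
qed

definition V2 :: "(int \<Rightarrow> int \<Rightarrow> complex) \<Rightarrow> int \<Rightarrow> int \<Rightarrow> complex" where
  "V2 f a b = f a b - f a (b + 1) + f (a + 1) (b + 1)"
definition T2 :: "(int \<Rightarrow> int \<Rightarrow> complex) \<Rightarrow> int \<Rightarrow> int \<Rightarrow> complex" where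
  "T2 f a b = V2 f a b + V2 f b a"

definition HM :: "(int \<Rightarrow> int \<Rightarrow> int \<Rightarrow> complex) \<Rightarrow> int \<Rightarrow> int \<Rightarrow> int \<Rightarrow> complex" where
  "HM W x a v = esum (\<lambda>u. W x u v) (x + 1) a + W (x - 1) x v"
definition FM :: "(int \<Rightarrow> int \<Rightarrow> int \<Rightarrow> complex) \<Rightarrow> int \<Rightarrow> int \<Rightarrow> int \<Rightarrow> complex" where
  "FM W b x a = esum (\<lambda>v. HM W x a v) (a + 1) b + HM W x (a - 1) a"

definition box2 :: "(int \<Rightarrow> int \<Rightarrow> complex) \<Rightarrow> int \<Rightarrow> int \<Rightarrow> int \<Rightarrow> int \<Rightarrow> complex" where
  "box2 G r1 s1 r2 s2 = esum (\<lambda>v. esum (\<lambda>u. G u v) r1 s1) r2 s2"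
definition P2 :: "(int \<Rightarrow> int \<Rightarrow> complex) \<Rightarrow> int \<Rightarrow> int \<Rightarrow> complex" where
  "P2 G y1 y2 = prim (\<lambda>v. prim (\<lambda>u. G u v) y1) y2"

lemma box2_P2: "box2 G r1 s1 r2 s2 = P2 G s1 s2 - P2 G (r1 - 1) s2 - P2 G s1 (r2 - 1) + P2 G (r1 - 1) (r2 - 1)"
  unfolding box2_def P2_def by (simp only: esum_prim prim_diff) simp

lemma V2box: "esum (\<lambda>v. esum (\<lambda>u. V2 G u v) r1 s1) r2 s2 =
   box2 G r1 s1 r2 s2 - box2 G r1 s1 (r2 + 1) (s2 + 1) + box2 G (r1 + 1) (s1 + 1) (r2 + 1) (s2 + 1)"
proof -
  have e1: "esum (\<lambda>v. esum (\<lambda>u. G u (v + 1)) r1 s1) r2 s2 = box2 G r1 s1 (r2 + 1) (s2 + 1)"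
    unfolding box2_def using esum_shift[of "\<lambda>v. esum (\<lambda>u. G u v) r1 s1" r2 s2] by simp
  have e2: "esum (\<lambda>v. esum (\<lambda>u. G (u + 1) (v + 1)) r1 s1) r2 s2 = box2 G (r1 + 1) (s1 + 1) (r2 + 1) (s2 + 1)"
    unfolding box2_def using esum_shift[of "\<lambda>v. esum (\<lambda>u. G u v) (r1+1) (s1+1)" r2 s2]
      esum_shift[of "\<lambda>u. G u _" r1 s1] by simp
  show ?thesis unfolding V2_def esum_add esum_diff e1 e2 by (simp add: box2_def)
qed

lemma FM_box2: "FM (\<lambda>x u v. A u v) b x a = box2 A x a (a + 1) b + box2 A x (a - 1) a a"
  unfolding FM_def HM_def box2_def
  by (simp add: esum_low[of _ x] add.commute)

lemma core2_id: "T2 (FM (\<lambda>x u v. A u v) b) x a = - esum (\<lambda>v. esum (\<lambda>u. V2 A u v) x (a - 1)) x (a - 1)"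
  unfolding T2_def V2_def[of "FM _ b"] FM_box2 V2box box2_P2
  by (simp add: algebra_simps)

definition box3 :: "(int \<Rightarrow> int \<Rightarrow> int \<Rightarrow> complex) \<Rightarrow> int \<Rightarrow> int \<Rightarrow> int \<Rightarrow> int \<Rightarrow> int \<Rightarrow> int \<Rightarrow> complex" where
  "box3 A r1 s1 r2 s2 r3 s3 = esum (\<lambda>v. esum (\<lambda>u. esum (\<lambda>t. A t u v) r1 s1) r2 s2) r3 s3"
definition P3 :: "(int \<Rightarrow> int \<Rightarrow> int \<Rightarrow> complex) \<Rightarrow> int \<Rightarrow> int \<Rightarrow> int \<Rightarrow> complex" where
  "P3 A y1 y2 y3 = prim (\<lambda>v. prim (\<lambda>u. prim (\<lambda>t. A t u v) y1) y2) y3"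

lemma box3_P3: "box3 A r1 s1 r2 s2 r3 s3 =
   P3 A s1 s2 s3 - P3 A (r1 - 1) s2 s3 - P3 A s1 (r2 - 1) s3 + P3 A (r1 - 1) (r2 - 1) s3
 - P3 A s1 s2 (r3 - 1) + P3 A (r1 - 1) s2 (r3 - 1) + P3 A s1 (r2 - 1) (r3 - 1) - P3 A (r1 - 1) (r2 - 1) (r3 - 1)"
  unfolding box3_def P3_def by (simp only: esum_prim prim_diff) simp

definition atom12 :: "(int \<Rightarrow> int \<Rightarrow> int \<Rightarrow> complex) \<Rightarrow> int \<Rightarrow> int \<Rightarrow> int \<Rightarrow> int \<Rightarrow> complex" where
  "atom12 A r s r3 s3 = esum (\<lambda>v. esum (\<lambda>u. esum (\<lambda>t. V2 (\<lambda>t u. A t u v) t u) r s) r s) r3 s3"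
definition atom23 :: "(int \<Rightarrow> int \<Rightarrow> int \<Rightarrow> complex) \<Rightarrow> int \<Rightarrow> int \<Rightarrow> int \<Rightarrow> int \<Rightarrow> complex" where
  "atom23 A r1 s1 r s = esum (\<lambda>v. esum (\<lambda>u. esum (\<lambda>t. V2 (A t) u v) r1 s1) r s) r s"

lemma box2_box3: "box2 (\<lambda>t u. A t u v) r1 s1 r2 s2 = esum (\<lambda>u. esum (\<lambda>t. A t u v) r1 s1) r2 s2"
  by (simp add: box2_def)

lemma atom12_box: "atom12 A r s r3 s3 = box3 A r s r s r3 s3 - box3 A r s (r + 1) (s + 1) r3 s3
   + box3 A (r + 1) (s + 1) (r + 1) (s + 1) r3 s3"
  unfolding atom12_def V2box box2_box3 box3_def esum_add esum_diff by simp

lemma atom23_box: "atom23 A r1 s1 r s = box3 A r1 s1 r s r s - box3 A r1 s1 r s (r + 1) (s + 1)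
   + box3 A r1 s1 (r + 1) (s + 1) (r + 1) (s + 1)"
proof -
  have "atom23 A r1 s1 r s = esum (\<lambda>v. esum (\<lambda>u. V2 (\<lambda>u v. esum (\<lambda>t. A t u v) r1 s1) u v) r s) r s"
    unfolding atom23_def V2_def esum_add esum_diff by simp
  also have "\<dots> = box3 A r1 s1 r s r s - box3 A r1 s1 r s (r + 1) (s + 1)
   + box3 A r1 s1 (r + 1) (s + 1) (r + 1) (s + 1)"
    unfolding V2box by (simp add: box2_def box3_def)
  finally show ?thesis .
qed

lemma FM_box3: "FM (\<lambda>x u v. esum (\<lambda>t. A t u v) c x) b x a =
   box3 A c x (x + 1) a (a + 1) b + box3 A c (x - 1) x x (a + 1) b
 + box3 A c x (x + 1) (a - 1) a a + box3 A c (x - 1) x x a a"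
  unfolding FM_def HM_def box3_def by (simp add: esum_add)

lemma core3_id: "T2 (FM (\<lambda>x u v. esum (\<lambda>t. A t u v) c x) b) x a =
   - atom23 A c (x - 1) x (a - 1) - atom12 A (x + 1) a (a + 1) b - atom12 A x x x x + atom23 A x x x x + atom12 A x x x (x + 1) + atom12 A x x x a - atom23 A x a x x - atom12 A x x x (a + 1) + atom23 A x (a - 1) x x + atom12 A x a x x - atom23 A x x x a - atom12 A x a x (x + 1) - 2 * atom12 A x (a - 1) x x + atom12 A x (a - 1) x (x + 1) + 2 * atom23 A x x (x + 1) a + atom12 A (x + 1) a x (x + 1) - atom23 A x (x + 1) (x + 1) a - atom12 A (x + 1) a x a + atom12 A (x + 1) (a - 1) x x - atom23 A x x (x + 1) (a - 1) - atom12 A (x + 1) (a - 1) x (x + 1)"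
  unfolding T2_def V2_def[of "FM _ b"] FM_box3 atom12_box atom23_box box3_P3
  by (simp add: algebra_simps)

lemma T2_add: "T2 (\<lambda>a b. f a b + g a b) x y = T2 f x y + T2 g x y"
  by (simp add: T2_def V2_def algebra_simps)
lemma T2_diff: "T2 (\<lambda>a b. f a b - g a b) x y = T2 f x y - T2 g x y"
  by (simp add: T2_def V2_def algebra_simps)
lemma T2_zero: "T2 (\<lambda>a b. 0) x y = 0"
  by (simp add: T2_def V2_def)
lemma T2_esum: "T2 (\<lambda>a b. esum (\<lambda>l. G a b l) c d) x y = esum (\<lambda>l. T2 (\<lambda>a b. G a b l) x y) c d"
  by (simp add: T2_def V2_def esum_add esum_diff)

lemma square2:
  assumes "\<And>u v. T2 g u v = 0"
  shows "esum (\<lambda>v. esum (\<lambda>u. V2 g u v) r s) r s = 0"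
proof -
  let ?S = "esum (\<lambda>v. esum (\<lambda>u. V2 g u v) r s) r s"
  have "?S = esum (\<lambda>u. esum (\<lambda>v. V2 g u v) r s) r s" by (rule esum_swap)
  then have "2 * ?S = esum (\<lambda>v. esum (\<lambda>u. V2 g u v) r s) r s + esum (\<lambda>v. esum (\<lambda>u. V2 g v u) r s) r s"
    by simp
  also have "\<dots> = esum (\<lambda>v. esum (\<lambda>u. T2 g u v) r s) r s"
    by (simp add: T2_def esum_add)
  also have "\<dots> = 0" using assms by simp
  finally show ?thesis by simp
qed

lemma atom12_zero:
  assumes "\<And>t u v. T2 (\<lambda>t u. A t u v) t u = 0"
  shows "atom12 A r s r3 s3 = 0"
  unfolding atom12_def using square2[of "\<lambda>t u. A t u _", OF assms] by simp

lemma atom23_zero: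
  assumes "\<And>t u v. T2 (A t) u v = 0"
  shows "atom23 A r1 s1 r s = 0"
proof -
  have "atom23 A r1 s1 r s = esum (\<lambda>v. esum (\<lambda>u. V2 (\<lambda>u v. esum (\<lambda>t. A t u v) r1 s1) u v) r s) r s"
    unfolding atom23_def V2_def esum_add esum_diff by simp
  also have "\<dots> = 0"
  proof (rule square2)
    fix u v
    show "T2 (\<lambda>u v. esum (\<lambda>t. A t u v) r1 s1) u v = 0"
      unfolding T2_esum using assms by simp
  qed
  finally show ?thesis .
qed

lemma core3:
  assumes "\<And>t u v. T2 (\<lambda>t u. A t u v) t u = 0" "\<And>t u v. T2 (A t) u v = 0"
  shows "T2 (FM (\<lambda>x u v. esum (\<lambda>t. A t u v) c x) b) x a = 0"
  unfolding core3_id atom12_zero[OF assms(1)] atom23_zero[OF assms(2)] by simp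

lemma core2:
  assumes "\<And>u v. T2 A u v = 0"
  shows "T2 (FM (\<lambda>x u v. A u v) b) x a = 0"
  unfolding core2_id square2[OF assms] by simp

lemma step_decomp: "f x = f 0 + esum (\<lambda>t. f t - f (t - 1)) 1 x"
proof -
  let ?g = "\<lambda>x. f x - esum (\<lambda>t. f t - f (t - 1)) 1 x"
  have "?g (x + 1) = ?g x" for x by (simp add: esum_up)
  then have "?g x = ?g 0" by (rule int_const)
  moreover have "esum (\<lambda>t. f t - f (t - 1)) 1 0 = 0" using esum_empty2[of _ 0] by simp
  ultimately show ?thesis by (simp add: algebra_simps)
qed

lemma FM_add: "FM (\<lambda>x u v. W1 x u v + W2 x u v) b x a = FM W1 b x a + FM W2 b x a"
  by (simp add: FM_def HM_def esum_add)

lemma lemmaM: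
  assumes h1: "\<And>x u v. T2 (W x) u v = 0"
    and h2: "\<And>x u v. T2 (\<lambda>x u. W x u v - W (x - 1) u v) x u = 0"
  shows "T2 (FM W b) x a = 0"
proof -
  let ?Z = "\<lambda>t u v. W t u v - W (t - 1) u v"
  have W: "W = (\<lambda>x u v. W 0 u v + esum (\<lambda>t. ?Z t u v) 1 x)"
    by (intro ext) (rule step_decomp)
  have e: "(\<lambda>x u v. W 0 u v + esum (\<lambda>t. ?Z t u v) 1 x) = W" by (rule W[symmetric])
  have fm: "FM W b x' a' = FM (\<lambda>x u v. W 0 u v) b x' a' + FM (\<lambda>x u v. esum (\<lambda>t. ?Z t u v) 1 x) b x' a'" for x' a'
    using FM_add[of "\<lambda>x u v. W 0 u v" "\<lambda>x u v. esum (\<lambda>t. ?Z t u v) 1 x" b x' a'] unfolding e .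
  have fmext: "FM W b = (\<lambda>x' a'. FM (\<lambda>x u v. W 0 u v) b x' a' + FM (\<lambda>x u v. esum (\<lambda>t. ?Z t u v) 1 x) b x' a')"
    by (intro ext fm)
  have "T2 (FM W b) x a = T2 (\<lambda>x' a'. FM (\<lambda>x u v. W 0 u v) b x' a' + FM (\<lambda>x u v. esum (\<lambda>t. ?Z t u v) 1 x) b x' a') x a"
    by (simp only: fmext)
  also have "\<dots> = T2 (FM (\<lambda>x u v. W 0 u v) b) x a + T2 (FM (\<lambda>x u v. esum (\<lambda>t. ?Z t u v) 1 x) b) x a"
    by (rule T2_add)
  also have "T2 (FM (\<lambda>x u v. W 0 u v) b) x a = 0"
    by (rule core2) (rule h1)
  also have "T2 (FM (\<lambda>x u v. esum (\<lambda>t. ?Z t u v) 1 x) b) x a = 0"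
  proof (rule core3)
    fix t u v
    show "T2 (\<lambda>t u. ?Z t u v) t u = 0" by (rule h2)
    show "T2 (?Z t) u v = 0" using T2_diff[of "W t" "W (t - 1)" u v] h1 by simp
  qed
  finally show ?thesis by simp
qed

lemma lemmaT:
  assumes hK: "\<And>a l. T2 (\<lambda>a l. H a l - H (a - 1) l) a l = 0"
  shows "T2 (\<lambda>a b. esum (H a) (a + 1) b + H (a - 1) a) x y = 0"
proof -
  let ?K = "\<lambda>c l. H c l - H (c - 1) l"
  have Hd: "H a l = H 0 l + esum (\<lambda>c. ?K c l) 1 a" for a l
    by (rule step_decomp)
  have F: "esum (H a) (a + 1) b + H (a - 1) a =
     esum (H 0) a b + (box2 ?K 1 a (a + 1) b + box2 ?K 1 (a - 1) a a)" for a b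
  proof -
    have "H a = (\<lambda>l. H 0 l + esum (\<lambda>c. ?K c l) 1 a)" by (rule ext) (rule Hd)
    then have h1: "esum (H a) (a + 1) b = esum (H 0) (a + 1) b + box2 ?K 1 a (a + 1) b"
      by (simp only: box2_def esum_add)
    have h2: "H (a - 1) a = H 0 a + box2 ?K 1 (a - 1) a a"
      using Hd[of "a - 1" a] by (simp add: box2_def)
    show ?thesis unfolding h1 h2 esum_low[of "H 0" a b] by (simp add: algebra_simps)
  qed
  have t1: "T2 (\<lambda>a b. esum (H 0) a b) x y = 0"
    by (simp add: T2_def V2_def esum_prim)
  have t2: "T2 (\<lambda>a b. box2 ?K 1 a (a + 1) b + box2 ?K 1 (a - 1) a a) x y =
     - esum (\<lambda>v. esum (\<lambda>u. V2 ?K u v) (x + 1) y) (x + 1) y"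
    unfolding V2box unfolding T2_def V2_def box2_P2
    by (simp add: algebra_simps)
  have t3: "esum (\<lambda>v. esum (\<lambda>u. V2 ?K u v) (x + 1) y) (x + 1) y = 0"
    by (rule square2) (rule hK)
  have Fe: "(\<lambda>a b. esum (H a) (a + 1) b + H (a - 1) a) =
     (\<lambda>a b. esum (H 0) a b + (box2 ?K 1 a (a + 1) b + box2 ?K 1 (a - 1) a a))"
    by (intro ext F)
  have "T2 (\<lambda>a b. esum (H 0) a b + (box2 ?K 1 a (a + 1) b + box2 ?K 1 (a - 1) a a)) x y =
     T2 (\<lambda>a b. esum (H 0) a b) x y + T2 (\<lambda>a b. box2 ?K 1 a (a + 1) b + box2 ?K 1 (a - 1) a a) x y"
    by (rule T2_add)
  then show ?thesis unfolding Fe t1 t2 t3 by simp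
qed

lemma msum_add: "msum n (\<lambda>ls. f ls + g ls) k = msum n f k + msum n g k"
  by (induction n f k arbitrary: g rule: msum.induct) (simp_all add: esum_add)

lemma msum_diff: "msum n (\<lambda>ls. f ls - g ls) k = msum n f k - msum n g k"
  by (induction n f k arbitrary: g rule: msum.induct) (simp_all add: esum_diff)

lemma msum_zero: "msum n (\<lambda>ls. 0) k = 0"
  by (induction n "(\<lambda>ls::int list. 0::complex)" k rule: msum.induct) simp_all

lemma msum_cong: "(\<And>ls. length ls = n \<Longrightarrow> f ls = g ls) \<Longrightarrow> msum n f k = msum n g k"
proof (induction n f k arbitrary: g rule: msum.induct)
  case (1 A k) then show ?case by simp
next
  case (2 A k) then show ?case by simp
next
  case (3 n A k)
  have a: "msum (Suc n) (\<lambda>ls. esum (\<lambda>l. A (ls @ [l])) (k ! (n + 1) + 1) (k ! (n + 2))) (take (n + 2) k)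
     = msum (Suc n) (\<lambda>ls. esum (\<lambda>l. g (ls @ [l])) (k ! (n + 1) + 1) (k ! (n + 2))) (take (n + 2) k)"
    by (rule 3(1)) (simp add: 3(3))
  have b: "msum (Suc n) (\<lambda>ls. A (ls @ [k ! (n + 1)])) (take (n + 1) k @ [k ! (n + 1) - 1])
     = msum (Suc n) (\<lambda>ls. g (ls @ [k ! (n + 1)])) (take (n + 1) k @ [k ! (n + 1) - 1])"
    by (rule 3(2)) (simp add: 3(3))
  show ?case using a b by simp
qed

lemma msum_esum: "msum m (\<lambda>ls. esum (\<lambda>l. G ls l) c d) k = esum (\<lambda>l. msum m (\<lambda>ls. G ls l) k) c d"
proof -
  let ?g = "\<lambda>d. msum m (\<lambda>ls. esum (\<lambda>l. G ls l) c d) k - esum (\<lambda>l. msum m (\<lambda>ls. G ls l) k) c d"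
  have "?g (d + 1) = ?g d" for d by (simp add: esum_up msum_add)
  then have "?g d = ?g (c - 1)" by (rule int_const)
  then show ?thesis by (simp add: msum_zero)
qed

lemma msum_T2: "T2 (\<lambda>a b. msum m (\<lambda>ls. G a b ls) k) x y = msum m (\<lambda>ls. T2 (\<lambda>a b. G a b ls) x y) k"
  by (simp add: T2_def V2_def msum_add msum_diff)

lemma LP:
  assumes "length p = m"
  shows "msum (Suc m) A (p @ [c, d]) =
    esum (\<lambda>l. msum m (\<lambda>ls. A (ls @ [l])) (p @ [c])) (c + 1) d + msum m (\<lambda>ls. A (ls @ [c])) (p @ [c - 1])"
proof (cases m)
  case 0
  then have "p = []" using assms by simp
  then show ?thesis using 0 by (simp add: esum_low[of _ c d])
next
  case (Suc m')
  have k1: "(p @ [c, d]) ! (m' + 1) = c" using assms Suc by (simp add: nth_append)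
  have k2: "(p @ [c, d]) ! (m' + 2) = d" using assms Suc by (simp add: nth_append)
  have t1: "take (m' + 2) (p @ [c, d]) = p @ [c]" using assms Suc by simp
  have t2: "take (m' + 1) (p @ [c, d]) = p" using assms Suc by simp
  show ?thesis unfolding Suc msum.simps k1 k2 t1 t2 msum_esum by simp
qed

lemma F1:
  assumes "length q = m"
  shows "msum (Suc m) B (q @ [e, y]) - msum (Suc m) B (q @ [e, y - 1]) = msum m (\<lambda>ls. B (ls @ [y])) (q @ [e])"
  unfolding LP[OF assms] using esum_up[of _ "e + 1" "y - 1"] by simp

lemma bridge: "Tprime (length p) (Suc (length p)) F (p @ a # b # r) = T2 (\<lambda>a b. F (p @ a # b # r)) a b"
  by (simp add: Tprime_def shiftE_def diffD_def swapS_def T2_def V2_def list_update_append nth_append Let_def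
      algebra_simps)

definition HYP :: "nat \<Rightarrow> (int list \<Rightarrow> complex) \<Rightarrow> bool" where
  "HYP n A \<longleftrightarrow> (\<forall>p r x y. length p + length r + 2 = n \<longrightarrow> T2 (\<lambda>a b. A (p @ a # b # r)) x y = 0)"

lemma HYP_D: "HYP n A \<Longrightarrow> length p + length r + 2 = n \<Longrightarrow> T2 (\<lambda>a b. A (p @ a # b # r)) x y = 0"
  unfolding HYP_def by blast

lemma list_cases3:
  obtains (nil) "r = []" | (one) c where "r = [c]" | (more) r' c1 c2 where "r = r' @ [c1, c2]"
proof (cases r rule: rev_cases)
  case Nil then show ?thesis using nil by simp
next
  case (snoc ys y)
  then show ?thesis
  proof (cases ys rule: rev_cases)
    case Nil then show ?thesis using one snoc by simp
  next
    case (snoc zs z) then show ?thesis using more \<open>r = ys @ [y]\<close> by simp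
  qed
qed

lemma main:
  "HYP n A \<Longrightarrow> length p + length r + 2 = n + 1 \<Longrightarrow> T2 (\<lambda>a b. msum n A (p @ a # b # r)) x y = 0"
proof (induction n arbitrary: A p r x y)
  case 0 then show ?case by simp
next
  case (Suc m)
  note hyp = Suc.prems(1)
  show ?case
  proof (cases r rule: list_cases3)
    case nil
    then have lp: "length p = m" using Suc.prems(2) by simp
    define Hh where "Hh a l = msum m (\<lambda>ls. A (ls @ [l])) (p @ [a])" for a l
    have e: "(\<lambda>a b. msum (Suc m) A (p @ a # b # r)) = (\<lambda>a b. esum (Hh a) (a + 1) b + Hh (a - 1) a)"
      unfolding nil Hh_def using LP[OF lp] by (intro ext) simp
    have hK: "T2 (\<lambda>a l. Hh a l - Hh (a - 1) l) a0 l0 = 0" for a0 l0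
    proof (cases m)
      case 0
      then have "p = []" using lp by simp
      then show ?thesis using 0 by (simp add: Hh_def T2_zero)
    next
      case (Suc m')
      obtain p' e where pe: "p = p' @ [e]" using lp Suc by (cases p rule: rev_cases) auto
      have lp': "length p' = m'" using lp Suc pe by simp
      have d: "Hh a l - Hh (a - 1) l = msum m' (\<lambda>ls. A (ls @ [a, l])) (p' @ [e])" for a l
        unfolding Hh_def pe Suc using F1[OF lp', of "\<lambda>ls. A (ls @ [l])" e a] by simp
      have "T2 (\<lambda>a l. Hh a l - Hh (a - 1) l) a0 l0 = T2 (\<lambda>a l. msum m' (\<lambda>ls. A (ls @ [a, l])) (p' @ [e])) a0 l0"
        unfolding d ..
      also have "\<dots> = msum m' (\<lambda>ls. T2 (\<lambda>a l. A (ls @ [a, l])) a0 l0) (p' @ [e])"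
        by (rule msum_T2)
      also have "\<dots> = msum m' (\<lambda>ls. 0) (p' @ [e])"
      proof (rule msum_cong)
        fix ls :: "int list" assume "length ls = m'"
        then show "T2 (\<lambda>a l. A (ls @ [a, l])) a0 l0 = 0"
          using HYP_D[OF hyp, of ls "[]"] Suc by simp
      qed
      finally show ?thesis by (simp add: msum_zero)
    qed
    show ?thesis unfolding e by (rule lemmaT) (rule hK)
  next
    case (one c)
    then have lp: "length p + 1 = m" using Suc.prems(2) by simp
    then obtain m' where m': "m = Suc m'" by (cases m) auto
    have lp': "length p = m'" using lp m' by simp
    define W where "W x u v = msum m' (\<lambda>ls. A (ls @ [u, v])) (p @ [x])" for x u v
    have hm: "msum m (\<lambda>ls. A (ls @ [v])) (p @ [x, a]) = HM W x a v" for x a v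
      unfolding m' LP[OF lp'] HM_def W_def by simp
    have e: "(\<lambda>a b. msum (Suc m) A (p @ a # b # r)) = FM W c"
    proof (intro ext)
      fix a b
      have lpa: "length (p @ [a]) = m" using lp by simp
      have "msum (Suc m) A (p @ a # b # r) = msum (Suc m) A ((p @ [a]) @ [b, c])" using one by simp
      also have "\<dots> = esum (\<lambda>v. msum m (\<lambda>ls. A (ls @ [v])) (p @ [a, b])) (b + 1) c
          + msum m (\<lambda>ls. A (ls @ [b])) (p @ [a, b - 1])"
        using LP[OF lpa, of A b c] by simp
      also have "\<dots> = FM W c a b" by (simp add: FM_def hm)
      finally show "msum (Suc m) A (p @ a # b # r) = FM W c a b" .
    qed
    have h1: "T2 (W x) u v = 0" for x u v
    proof -
      have "T2 (W x) u v = msum m' (\<lambda>ls. T2 (\<lambda>u v. A (ls @ [u, v])) u v) (p @ [x])"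
        unfolding W_def by (rule msum_T2)
      also have "\<dots> = msum m' (\<lambda>ls. 0) (p @ [x])"
      proof (rule msum_cong)
        fix ls :: "int list" assume "length ls = m'"
        then show "T2 (\<lambda>u v. A (ls @ [u, v])) u v = 0"
          using HYP_D[OF hyp, of ls "[]"] m' by simp
      qed
      finally show ?thesis by (simp add: msum_zero)
    qed
    have h2: "T2 (\<lambda>x u. W x u v - W (x - 1) u v) x u = 0" for x u v
    proof (cases m')
      case 0
      then show ?thesis by (simp add: W_def T2_zero)
    next
      case (Suc m'')
      obtain p'' e where pe: "p = p'' @ [e]" using lp' Suc by (cases p rule: rev_cases) auto
      have lp'': "length p'' = m''" using lp' Suc pe by simp
      have d: "W x u v - W (x - 1) u v = msum m'' (\<lambda>ls. A (ls @ [x, u, v])) (p'' @ [e])" for x u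
        unfolding W_def pe Suc using F1[OF lp'', of "\<lambda>ls. A (ls @ [u, v])" e x] by simp
      have "T2 (\<lambda>x u. W x u v - W (x - 1) u v) x u = T2 (\<lambda>x u. msum m'' (\<lambda>ls. A (ls @ [x, u, v])) (p'' @ [e])) x u"
        unfolding d ..
      also have "\<dots> = msum m'' (\<lambda>ls. T2 (\<lambda>x u. A (ls @ [x, u, v])) x u) (p'' @ [e])"
        by (rule msum_T2)
      also have "\<dots> = msum m'' (\<lambda>ls. 0) (p'' @ [e])"
      proof (rule msum_cong)
        fix ls :: "int list" assume "length ls = m''"
        then show "T2 (\<lambda>x u. A (ls @ [x, u, v])) x u = 0"
          using HYP_D[OF hyp, of ls "[v]"] m' Suc by simp
      qed
      finally show ?thesis by (simp add: msum_zero)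
    qed
    show ?thesis unfolding e by (rule lemmaM) (rule h1, rule h2)
  next
    case (more r' c1 c2)
    have lq: "length (p @ a # b # r') = m" for a b using Suc.prems(2) more by simp
    have hypm: "HYP m (\<lambda>ls. A (ls @ [l]))" for l
      unfolding HYP_def
    proof (intro allI impI)
      fix p0 r0 :: "int list" and x0 y0 :: int assume "length p0 + length r0 + 2 = m"
      then show "T2 (\<lambda>a b. A ((p0 @ a # b # r0) @ [l])) x0 y0 = 0"
        using HYP_D[OF hyp, of p0 "r0 @ [l]"] by simp
    qed
    have e: "(\<lambda>a b. msum (Suc m) A (p @ a # b # r)) =
      (\<lambda>a b. esum (\<lambda>l. msum m (\<lambda>ls. A (ls @ [l])) (p @ a # b # (r' @ [c1]))) (c1 + 1) c2
           + msum m (\<lambda>ls. A (ls @ [c1])) (p @ a # b # (r' @ [c1 - 1])))"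
    proof (intro ext)
      fix a b
      show "msum (Suc m) A (p @ a # b # r) = esum (\<lambda>l. msum m (\<lambda>ls. A (ls @ [l])) (p @ a # b # (r' @ [c1]))) (c1 + 1) c2
           + msum m (\<lambda>ls. A (ls @ [c1])) (p @ a # b # (r' @ [c1 - 1]))"
        using LP[OF lq[of a b], of A c1 c2] more by simp
    qed
    have l1: "length p + length (r' @ [c1]) + 2 = m + 1" "length p + length (r' @ [c1 - 1]) + 2 = m + 1"
      using Suc.prems(2) more by simp_all
    show ?thesis
      unfolding e T2_add T2_esum
      using Suc.IH[OF hypm l1(1)] Suc.IH[OF hypm l1(2)] by simp
  qed
qed

theorem corollary1:
  fixes n :: nat and A :: "int list \<Rightarrow> complex"
  assumes "n \<ge> 1"
    and "\<And>i l. Suc i < n \<Longrightarrow> length l = n \<Longrightarrow> Tprime i (Suc i) A l = 0"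
  shows "\<And>i k. i < n \<Longrightarrow> length k = n + 1 \<Longrightarrow> Tprime i (Suc i) (msum n A) k = 0"
proof -
  fix i :: nat and k :: "int list" assume i: "i < n" and k: "length k = n + 1"
  have hyp: "HYP n A" unfolding HYP_def
  proof (intro allI impI)
    fix p r :: "int list" and x y :: int assume l: "length p + length r + 2 = n"
    have "T2 (\<lambda>a b. A (p @ a # b # r)) x y = Tprime (length p) (Suc (length p)) A (p @ x # y # r)"
      by (rule bridge[symmetric])
    also have "\<dots> = 0" using assms(2)[of "length p" "p @ x # y # r"] l by simp
    finally show "T2 (\<lambda>a b. A (p @ a # b # r)) x y = 0" .
  qed
  have kk: "k = take i k @ k ! i # k ! Suc i # drop (Suc (Suc i)) k"
    using i k by (simp add: Cons_nth_drop_Suc)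
  have lt: "length (take i k) = i" using i k by simp
  have "Tprime i (Suc i) (msum n A) k =
      Tprime (length (take i k)) (Suc (length (take i k))) (msum n A) (take i k @ k ! i # k ! Suc i # drop (Suc (Suc i)) k)"
    using lt kk by simp
  also have "\<dots> = T2 (\<lambda>a b. msum n A (take i k @ a # b # drop (Suc (Suc i)) k)) (k ! i) (k ! Suc i)"
    by (rule bridge)
  also have "\<dots> = 0" by (rule main[OF hyp]) (use i k in simp)
  finally show "Tprime i (Suc i) (msum n A) k = 0" .
qed

end
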